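(* Let $\mathcal G$ be a finitely generated almost simple group which contains a distortion element, and let $\mathcal H$ be a normal subgroup of $\mathcal G$. Then every homomorphism $\psi:\mathcal H\to\mathbb R$ is trivial.
   Context: A group is almost simple if every normal subgroup is finite or has finite index. For a finitely generated group with finite generating set, $u$ is a distortion element if it has infinite order and $\liminf_{n\to\infty}|u^n|/n=0$, $|\cdot|$ the word length. *)

theory Defs
  imports "HOL-Algebra.Algebra" "HOL-Library.Liminf_Limsup" "HOL-Library.Extended_Real"
begin

definition word_length :: "('a, 'b) monoid_scheme \<Rightarrow> 'a set \<Rightarrow> 'a \<Rightarrow> nat" where
  "word_length G S g =
     (LEAST n. \<exists>ws. length ws = n \<and> set ws \<subseteq> S \<union> m_inv G ` S
                    \<and> foldr (\<otimes>\<^bsub>G\<^esub>) ws \<one>\<^bsub>G\<^esub> = g)"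

definition finite_generating_set :: "('a, 'b) monoid_scheme \<Rightarrow> 'a set \<Rightarrow> bool" where
  "finite_generating_set G S \<longleftrightarrow> finite S \<and> S \<subseteq> carrier G \<and> generate G S = carrier G"

definition finitely_generated :: "('a, 'b) monoid_scheme \<Rightarrow> bool" where
  "finitely_generated G \<longleftrightarrow> (\<exists>S. finite_generating_set G S)"

definition infinite_order :: "('a, 'b) monoid_scheme \<Rightarrow> 'a \<Rightarrow> bool" where
  "infinite_order G u \<longleftrightarrow> (\<forall>n::nat. n > 0 \<longrightarrow> u [^]\<^bsub>G\<^esub> n \<noteq> \<one>\<^bsub>G\<^esub>)"

definition distortion_element :: "('a, 'b) monoid_scheme \<Rightarrow> 'a set \<Rightarrow> 'a \<Rightarrow> bool" where
  "distortion_element G S u \<longleftrightarrow> u \<in> carrier G \<and> infinite_order G u \<and>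
     liminf (\<lambda>n::nat. ereal (real (word_length G S (u [^]\<^bsub>G\<^esub> n)) / real n)) = 0"

definition almost_simple :: "('a, 'b) monoid_scheme \<Rightarrow> bool" where
  "almost_simple G \<longleftrightarrow>
     (\<forall>N. N \<lhd> G \<longrightarrow> finite N \<or> finite (rcosets\<^bsub>G\<^esub> N))"

definition real_add_group :: "real monoid" where
  "real_add_group = \<lparr>carrier = UNIV, monoid.mult = (+), one = 0\<rparr>"

end

theory Submission imports Defs begin

lemma (in group) foldr_closed:
  assumes "set ws \<subseteq> carrier G"
  shows "foldr (\<otimes>) ws \<one> \<in> carrier G"
  using assms by (induction ws) auto

lemma (in group) foldr_mult:
  assumes "set ws \<subseteq> carrier G" "b \<in> carrier G"
  shows "foldr (\<otimes>) ws b = foldr (\<otimes>) ws \<one> \<otimes> b"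
  using assms by (induction ws) (auto simp: m_assoc foldr_closed)

lemma (in group) word_exists:
  assumes "S \<subseteq> carrier G" "x \<in> generate G S"
  shows "\<exists>ws. set ws \<subseteq> S \<union> m_inv G ` S \<and> foldr (\<otimes>) ws \<one> = x"
  using assms(2)
proof (induction rule: generate.induct)
  case one
  then show ?case by (intro exI[of _ "[]"]) auto
next
  case (incl h)
  then show ?case using assms(1) by (intro exI[of _ "[h]"]) auto
next
  case (inv h)
  then show ?case using assms(1) by (intro exI[of _ "[inv h]"]) auto
next
  case (eng h1 h2)
  then obtain w1 w2 where w: "set w1 \<subseteq> S \<union> m_inv G ` S" "foldr (\<otimes>) w1 \<one> = h1"
    "set w2 \<subseteq> S \<union> m_inv G ` S" "foldr (\<otimes>) w2 \<one> = h2" by blast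
  have sub: "S \<union> m_inv G ` S \<subseteq> carrier G" using assms(1) by auto
  have "foldr (\<otimes>) (w1 @ w2) \<one> = h1 \<otimes> h2"
  proof -
    have c1: "set w1 \<subseteq> carrier G" "set w2 \<subseteq> carrier G" using w sub by blast+
    then show ?thesis using foldr_mult[OF c1(1) foldr_closed[OF c1(2)]] w by simp
  qed
  then show ?case using w by (intro exI[of _ "w1 @ w2"]) auto
qed

lemma (in group) wl_spec:
  assumes "finite_generating_set G S" "x \<in> carrier G"
  shows "\<exists>ws. length ws = word_length G S x \<and> set ws \<subseteq> S \<union> m_inv G ` S \<and> foldr (\<otimes>) ws \<one> = x"
proof -
  obtain ws where "set ws \<subseteq> S \<union> m_inv G ` S \<and> foldr (\<otimes>) ws \<one> = x"
    using word_exists[of S x] assms unfolding finite_generating_set_def by auto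
  then have "\<exists>n ws. length ws = n \<and> set ws \<subseteq> S \<union> m_inv G ` S \<and> foldr (\<otimes>) ws \<one> = x" by blast
  from LeastI_ex[OF this] show ?thesis unfolding word_length_def by blast
qed

lemma wl_le:
  assumes "set ws \<subseteq> S \<union> m_inv G ` S" "foldr (\<otimes>\<^bsub>G\<^esub>) ws \<one>\<^bsub>G\<^esub> = x"
  shows "word_length G S x \<le> length ws"
  unfolding word_length_def using assms by (intro Least_le) blast

lemma (in group) wl_mult:
  assumes "finite_generating_set G S" "x \<in> carrier G" "y \<in> carrier G"
  shows "word_length G S (x \<otimes> y) \<le> word_length G S x + word_length G S y"
proof -
  obtain w1 where w1: "length w1 = word_length G S x" "set w1 \<subseteq> S \<union> m_inv G ` S" "foldr (\<otimes>) w1 \<one> = x"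
    using wl_spec assms by blast
  obtain w2 where w2: "length w2 = word_length G S y" "set w2 \<subseteq> S \<union> m_inv G ` S" "foldr (\<otimes>) w2 \<one> = y"
    using wl_spec assms by blast
  have sub: "S \<union> m_inv G ` S \<subseteq> carrier G" using assms(1) unfolding finite_generating_set_def by auto
  have "foldr (\<otimes>) (w1 @ w2) \<one> = x \<otimes> y"
  proof -
    have c1: "set w1 \<subseteq> carrier G" "set w2 \<subseteq> carrier G" using w1 w2 sub by blast+
    then show ?thesis using foldr_mult[OF c1(1) foldr_closed[OF c1(2)]] w1 w2 by simp
  qed
  then have "word_length G S (x \<otimes> y) \<le> length (w1 @ w2)"
    using w1 w2 by (intro wl_le) auto
  then show ?thesis using w1 w2 by simp
qed

lemma (in group) sub_pow_closed:
  assumes "subgroup H G" "h \<in> H" shows "h [^] (n::nat) \<in> H"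
proof (induction n)
  case 0 then show ?case using assms subgroup.one_closed by simp
next
  case (Suc n) then show ?case using assms subgroup.m_closed by fastforce
qed

lemma (in group) eq_helper:
  assumes "r \<in> carrier G" "s \<in> carrier G" "r' \<in> carrier G" "x' \<in> carrier G"
  shows "inv r \<otimes> (s \<otimes> x') = inv r \<otimes> s \<otimes> r' \<otimes> (inv r' \<otimes> x')"
proof -
  have "r' \<otimes> (inv r' \<otimes> x') = x'" using assms by (simp add: m_assoc[symmetric])
  then show ?thesis using assms by (simp add: m_assoc)
qed

lemma (in group) psi_basic:
  assumes "subgroup H G" and add: "\<And>a b. a \<in> H \<Longrightarrow> b \<in> H \<Longrightarrow> \<psi> (a \<otimes> b) = \<psi> a + \<psi> b"
  shows "\<psi> \<one> = 0" "\<And>h. h \<in> H \<Longrightarrow> \<psi> (inv h) = - \<psi> h"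
    "\<And>h n. h \<in> H \<Longrightarrow> \<psi> (h [^] (n::nat)) = real n * \<psi> h"
proof -
  have o: "\<one> \<in> H" using assms(1) subgroup.one_closed by blast
  show z: "\<psi> \<one> = 0" using add[OF o o] by simp
  show "\<psi> (inv h) = - \<psi> h" if "h \<in> H" for h
    using add[of h "inv h"] that z assms(1) subgroup.m_inv_closed subgroup.mem_carrier by fastforce
  show "\<psi> (h [^] (n::nat)) = real n * \<psi> h" if h: "h \<in> H" for h n
  proof (induction n)
    case 0 then show ?case using z by simp
  next
    case (Suc n)
    have "h [^] n \<in> H" using h assms(1) sub_pow_closed by blast
    then show ?case using Suc add[of "h [^] n" h] h by (simp add: algebra_simps)
  qed
qed

lemma (in group) lipschitz:
  assumes fg: "finite_generating_set G S" and N: "H \<lhd> G" and fin: "finite (rcosets H)"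
    and add: "\<And>a b. a \<in> H \<Longrightarrow> b \<in> H \<Longrightarrow> \<psi> (a \<otimes> b) = \<psi> a + \<psi> b"
  shows "\<exists>C M. M \<ge> 0 \<and> (\<forall>x\<in>H. \<bar>\<psi> x\<bar> \<le> C + M * real (word_length G S x))"
proof -
  have sg: "subgroup H G" using N normal_imp_subgroup by blast
  note pb = psi_basic[OF sg add]
  define rep where "rep x = (SOME y. y \<in> H #> x)" for x
  have rep_in: "rep x \<in> H #> x" if "x \<in> carrier G" for x
  proof -
    have "x \<in> H #> x" using that sg unfolding r_coset_def
      by (metis UN_iff insertI1 l_one subgroup.one_closed)
    then show ?thesis unfolding rep_def by (rule someI)
  qed
  have rep_c: "rep x \<in> carrier G" if "x \<in> carrier G" for x
    using rep_in[OF that] that sg r_coset_subset_G subgroup.subset by blast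
  have e_in: "inv (rep x) \<otimes> x \<in> H" if x: "x \<in> carrier G" for x
  proof -
    have "rep x \<in> x <# H" using rep_in[OF x] normal.coset_eq[OF N] x by blast
    then obtain h where h: "h \<in> H" "rep x = x \<otimes> h" unfolding l_coset_def by blast
    have hc: "h \<in> carrier G" using subgroup.mem_carrier[OF sg h(1)] .
    have "inv (rep x) \<otimes> x = inv h" using h hc x by (simp add: inv_mult_group m_assoc)
    then show ?thesis using h sg subgroup.m_inv_closed by fastforce
  qed
  define S' where "S' = S \<union> m_inv G ` S"
  have S'c: "S' \<subseteq> carrier G" and S'f: "finite S'" using fg unfolding S'_def finite_generating_set_def by auto
  define T where "T = rep ` carrier G"
  have "T \<subseteq> (\<lambda>C. SOME y. y \<in> C) ` (rcosets H)"
    unfolding T_def rep_def RCOSETS_def by blast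
  then have Tf: "finite T" using fin finite_surj by blast
  have Tc: "T \<subseteq> carrier G" unfolding T_def using rep_c by blast
  define F where "F = (\<lambda>(a,s,c). inv a \<otimes> s \<otimes> c) ` (T \<times> S' \<times> T) \<inter> H"
  have Ff: "finite F" unfolding F_def using Tf S'f by blast
  define M where "M = (\<Sum>z\<in>F. \<bar>\<psi> z\<bar>)"
  have M0: "M \<ge> 0" unfolding M_def by (simp add: sum_nonneg)
  have Mb: "\<bar>\<psi> z\<bar> \<le> M" if "z \<in> F" for z
    unfolding M_def using member_le_sum[of z F "\<lambda>z. \<bar>\<psi> z\<bar>"] Ff that by auto
  define \<Phi> where "\<Phi> x = \<psi> (inv (rep x) \<otimes> x)" for x
  have step: "\<bar>\<Phi> (foldr (\<otimes>) ws \<one>) - \<Phi> \<one>\<bar> \<le> M * real (length ws)" if "set ws \<subseteq> S'" for ws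
    using that
  proof (induction ws)
    case Nil then show ?case by simp
  next
    case (Cons s ws)
    define x' where "x' = foldr (\<otimes>) ws \<one>"
    have sc: "s \<in> carrier G" using Cons.prems S'c by auto
    have x'c: "x' \<in> carrier G" unfolding x'_def using Cons.prems S'c foldr_closed by auto
    define x where "x = s \<otimes> x'"
    have xc: "x \<in> carrier G" unfolding x_def using sc x'c by simp
    define b where "b = inv (rep x) \<otimes> s \<otimes> rep x'"
    have eq: "inv (rep x) \<otimes> x = b \<otimes> (inv (rep x') \<otimes> x')"
      unfolding b_def using eq_helper[OF rep_c[OF xc] sc rep_c[OF x'c] x'c] unfolding x_def by simp
    have "b = (inv (rep x) \<otimes> x) \<otimes> inv (inv (rep x') \<otimes> x')"
      using eq rep_c[OF xc] rep_c[OF x'c] sc x'c unfolding b_def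
      by (metis inv_closed m_closed r_inv_ex inv_solve_right)
    then have bH: "b \<in> H" using e_in[OF xc] e_in[OF x'c] sg
      by (metis subgroup.m_closed subgroup.m_inv_closed)
    have "b \<in> (\<lambda>(a,s,c). inv a \<otimes> s \<otimes> c) ` (T \<times> S' \<times> T)" unfolding b_def T_def using xc x'c Cons.prems
      by (auto intro!: image_eqI[where x="(rep x, s, rep x')"])
    then have "b \<in> F" unfolding F_def using bH by blast
    then have "\<bar>\<psi> b\<bar> \<le> M" by (rule Mb)
    moreover have "\<Phi> x = \<psi> b + \<Phi> x'" unfolding \<Phi>_def using eq add[OF bH e_in[OF x'c]] by simp
    moreover have "foldr (\<otimes>) (s # ws) \<one> = x" unfolding x_def x'_def by simp
    ultimately show ?case using Cons.IH Cons.prems unfolding x'_def by (simp add: algebra_simps)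
  qed
  define C where "C = \<bar>\<Phi> \<one>\<bar> + \<bar>\<psi> (inv (rep \<one>))\<bar>"
  have "\<bar>\<psi> x\<bar> \<le> C + M * real (word_length G S x)" if xH: "x \<in> H" for x
  proof -
    have xc: "x \<in> carrier G" using subgroup.mem_carrier[OF sg xH] .
    obtain ws where ws: "length ws = word_length G S x" "set ws \<subseteq> S'" "foldr (\<otimes>) ws \<one> = x"
      using wl_spec[OF fg xc] unfolding S'_def by blast
    have st: "\<bar>\<Phi> x - \<Phi> \<one>\<bar> \<le> M * real (word_length G S x)" using step[OF ws(2)] ws by simp
    have "H #> x = H" using subgroup.rcos_const[OF sg is_group xH] .
    moreover have "H #> \<one> = H" using subgroup.rcos_const[OF sg is_group subgroup.one_closed[OF sg]] .
    ultimately have r: "rep x = rep \<one>" unfolding rep_def by simp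
    have "rep x \<in> H" using rep_in[OF xc] \<open>H #> x = H\<close> by simp
    then have rH: "inv (rep x) \<in> H" using subgroup.m_inv_closed[OF sg] by blast
    have "\<Phi> x = \<psi> (inv (rep x)) + \<psi> x" unfolding \<Phi>_def using add[OF rH xH] .
    then have "\<Phi> x = \<psi> (inv (rep \<one>)) + \<psi> x" using r by simp
    then show ?thesis using st unfolding C_def by linarith
  qed
  then show ?thesis using M0 by (intro exI[of _ C] exI[of _ M]) blast
qed


lemma nat_pigeon:
  assumes "finite A" "\<And>n. f (n::nat) \<in> A"
  shows "\<exists>i j. i < j \<and> f i = f j"
proof -
  have "\<not> inj f"
  proof
    assume "inj f"
    have "range f \<subseteq> A" using assms(2) by blast
    then have "finite (range f)" using assms(1) finite_subset by blast
    then have "finite (UNIV :: nat set)" using \<open>inj f\<close> finite_imageD by blast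
    then show False by simp
  qed
  then obtain i j where "i \<noteq> j" "f i = f j" unfolding inj_def by blast
  then show ?thesis by (metis linorder_neqE_nat)
qed

lemma (in group) pow_finite_sub:
  assumes "subgroup K G" "finite K" "x \<in> K"
  shows "\<exists>n>0. x [^] (n::nat) = \<one>"
proof -
  have xc: "x \<in> carrier G" using subgroup.mem_carrier[OF assms(1) assms(3)] .
  obtain i j where ij: "i < j" "x [^] i = x [^] (j::nat)"
    using nat_pigeon[of K "\<lambda>n. x [^] n"] assms sub_pow_closed by blast
  have "x [^] j = x [^] i \<otimes> x [^] (j - i)" using nat_pow_mult[OF xc, of i "j - i"] ij(1) by simp
  then have "x [^] (j - i) = \<one>" using ij(2) xc by simp
  then show ?thesis using ij(1) by (intro exI[of _ "j - i"]) simp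
qed

lemma (in group) pow_finite_index:
  assumes "subgroup K G" "finite (rcosets K)" "x \<in> carrier G"
  shows "\<exists>n>0. x [^] (n::nat) \<in> K"
proof -
  have "\<And>n. K #> x [^] (n::nat) \<in> rcosets K" using assms(3) unfolding RCOSETS_def by blast
  then obtain i j where ij: "i < j" "K #> x [^] i = K #> x [^] (j::nat)"
    using nat_pigeon[of "rcosets K" "\<lambda>n. K #> x [^] n"] assms by blast
  have "x [^] j \<in> K #> x [^] i" using ij(2) rcos_self[of "x [^] j" K] assms by simp
  then have 1: "x [^] j \<otimes> inv (x [^] i) \<in> K" using subgroup.rcos_module_imp[OF assms(1) is_group] assms(3) by simp
  have "x [^] j = x [^] (j - i) \<otimes> x [^] i" using nat_pow_mult[OF assms(3), of "j - i" i] ij(1) by simp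
  then have "x [^] j \<otimes> inv (x [^] i) = x [^] (j - i)" using assms(3) by (simp add: m_assoc)
  then show ?thesis using 1 ij(1) by (intro exI[of _ "j - i"]) simp
qed

lemma (in group) conj_pow:
  assumes "g \<in> carrier G" "x \<in> carrier G"
  shows "(g \<otimes> x \<otimes> inv g) [^] (n::nat) = g \<otimes> x [^] n \<otimes> inv g"
proof (induction n)
  case 0 then show ?case using assms by simp
next
  case (Suc n)
  have c: "inv g \<otimes> (g \<otimes> z) = z" if "z \<in> carrier G" for z using assms that by (simp add: m_assoc[symmetric])
  have "(g \<otimes> x \<otimes> inv g) [^] Suc n = g \<otimes> x [^] n \<otimes> inv g \<otimes> (g \<otimes> x \<otimes> inv g)" using Suc by simp
  also have "\<dots> = g \<otimes> (x [^] n \<otimes> (inv g \<otimes> (g \<otimes> (x \<otimes> inv g))))" using assms by (simp add: m_assoc)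
  also have "\<dots> = g \<otimes> (x [^] n \<otimes> (x \<otimes> inv g))" using c assms by simp
  also have "\<dots> = g \<otimes> x [^] Suc n \<otimes> inv g" using assms by (simp add: m_assoc)
  finally show ?case .
qed

lemma liminf_freq:
  assumes "liminf (\<lambda>n. ereal (f n)) = 0" "(\<epsilon>::real) > 0"
  shows "\<exists>m\<ge>N. f (m::nat) < \<epsilon>"
proof (rule ccontr)
  assume "\<not> ?thesis"
  then have "eventually (\<lambda>m. ereal \<epsilon> \<le> ereal (f m)) sequentially"
    unfolding eventually_sequentially by (auto simp: not_less)
  then have "ereal \<epsilon> \<le> liminf (\<lambda>n. ereal (f n))" by (rule Liminf_bounded)
  then show False using assms by simp
qed


lemma (in group) distortion_kills:
  fixes \<psi> :: "_ \<Rightarrow> real"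
  assumes fg: "finite_generating_set G S" and N: "H \<lhd> G" and fin: "finite (rcosets H)"
    and add: "\<And>a b. a \<in> H \<Longrightarrow> b \<in> H \<Longrightarrow> \<psi> (a \<otimes> b) = \<psi> a + \<psi> b"
    and du: "distortion_element G S u" and k: "k > 0" "u [^] (k::nat) \<in> H" and g: "g \<in> carrier G"
  shows "\<psi> (g \<otimes> u [^] k \<otimes> inv g) = 0"
proof (rule ccontr)
  assume ne: "\<psi> (g \<otimes> u [^] k \<otimes> inv g) \<noteq> 0"
  have sg: "subgroup H G" using N normal_imp_subgroup by blast
  have uc: "u \<in> carrier G" using du unfolding distortion_element_def by blast
  have lim: "liminf (\<lambda>n::nat. ereal (real (word_length G S (u [^] n)) / real n)) = 0"
    using du unfolding distortion_element_def by blast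
  obtain C M where CM: "M \<ge> 0" "\<And>x. x \<in> H \<Longrightarrow> \<bar>\<psi> x\<bar> \<le> C + M * real (word_length G S x)"
    using lipschitz[OF fg N fin add] by blast
  define y where "y = g \<otimes> u [^] k \<otimes> inv g"
  have yH: "y \<in> H" unfolding y_def using N k(2) g normal_inv_iff by blast
  define a where "a = \<bar>\<psi> y\<bar>"
  have a0: "a > 0" using ne unfolding a_def y_def by simp
  define wl where "wl = word_length G S"
  define B where "B = real (wl g + wl (inv g))"
  define D where "D = (\<Sum>r<k. real (wl (inv (u [^] r))))"
  define C2 where "C2 = C + M * (B + D) + a / 2"
  define \<epsilon> where "\<epsilon> = a / (2 * (M * real k + 1))"
  have p: "2 * (M * real k + 1) > 0" using CM(1) by (smt (verit) mult_nonneg_nonneg of_nat_0_le_iff)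
  have eps0: "\<epsilon> > 0" unfolding \<epsilon>_def using a0 p by simp
  have epsk: "M * \<epsilon> * real k \<le> a / 2"
  proof -
    have "M * \<epsilon> * real k = (a / 2) * (M * real k / (M * real k + 1))"
      unfolding \<epsilon>_def by (simp add: field_simps)
    also have "\<dots> \<le> (a / 2) * 1"
    proof (intro mult_left_mono)
      have "M * real k \<ge> 0" using CM(1) by simp
      then show "M * real k / (M * real k + 1) \<le> 1" by (simp add: divide_le_eq)
    qed (use a0 in auto)
    finally show ?thesis by simp
  qed
  define N0 where "N0 = nat (ceiling (2 * C2 / a)) + 1"
  obtain m where m: "m \<ge> k * N0" "real (wl (u [^] m)) / real m < \<epsilon>"
    using liminf_freq[OF lim eps0, of "k * N0"] unfolding wl_def by blast
  define q where "q = m div k"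
  define r where "r = m mod k"
  have mqr: "m = k * q + r" unfolding q_def r_def by simp
  have rk: "r < k" unfolding r_def using k(1) by simp
  have qN: "q \<ge> N0" unfolding q_def using m(1) k(1)
    by (metis div_le_mono nonzero_mult_div_cancel_left not_gr0)
  have mpos: "m > 0" using m(1) k(1) unfolding N0_def by simp
  have wlm: "real (wl (u [^] m)) \<le> \<epsilon> * real m" using m(2) mpos by (simp add: divide_less_eq)
  have ukq: "u [^] (k * q) = u [^] m \<otimes> inv (u [^] r)"
  proof -
    have "u [^] m = u [^] (k * q) \<otimes> u [^] r" using nat_pow_mult[OF uc, of "k * q" r] mqr by simp
    then show ?thesis using uc by (simp add: m_assoc)
  qed
  have "real (wl (inv (u [^] r))) \<le> D"
    unfolding D_def using rk by (intro member_le_sum) auto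
  then have w1: "real (wl (u [^] (k * q))) \<le> real (wl (u [^] m)) + D"
    using wl_mult[OF fg, of "u [^] m" "inv (u [^] r)"] ukq uc unfolding wl_def by simp
  have yq: "y [^] q = g \<otimes> u [^] (k * q) \<otimes> inv g"
    unfolding y_def using conj_pow[OF g, of "u [^] k" q] uc g by (simp add: nat_pow_pow)
  have w2: "real (wl (y [^] q)) \<le> B + real (wl (u [^] (k * q)))"
  proof -
    have "wl (g \<otimes> u [^] (k * q) \<otimes> inv g) \<le> wl (g \<otimes> u [^] (k * q)) + wl (inv g)"
      using wl_mult[OF fg, of "g \<otimes> u [^] (k * q)" "inv g"] g uc unfolding wl_def by simp
    moreover have "wl (g \<otimes> u [^] (k * q)) \<le> wl g + wl (u [^] (k * q))"
      using wl_mult[OF fg, of g "u [^] (k * q)"] g uc unfolding wl_def by simp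
    ultimately show ?thesis unfolding yq B_def by simp
  qed
  have "\<psi> (y [^] q) = real q * \<psi> y" using psi_basic(3)[OF sg add yH] .
  then have qa: "real q * a = \<bar>\<psi> (y [^] q)\<bar>" unfolding a_def by (simp add: abs_mult)
  also have "\<dots> \<le> C + M * real (wl (y [^] q))" using CM(2)[OF sub_pow_closed[OF sg yH]] unfolding wl_def .
  finally have h1: "real q * a \<le> C + M * (B + D + real (wl (u [^] m)))"
    using w1 w2 CM(1) by (smt (verit) mult_left_mono)
  have "real m \<le> real k * (real q + 1)" using mqr rk by (simp add: algebra_simps)
  then have "M * real (wl (u [^] m)) \<le> M * (\<epsilon> * (real k * (real q + 1)))"
    using wlm eps0 CM(1) by (smt (verit) mult_left_mono)
  also have "\<dots> = (M * \<epsilon> * real k) * (real q + 1)" by (simp add: algebra_simps)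
  also have "\<dots> \<le> (a / 2) * (real q + 1)" using epsk by (intro mult_right_mono) auto
  finally have h2: "M * real (wl (u [^] m)) \<le> (a / 2) * (real q + 1)" .
  have "real q * a / 2 \<le> C2" using h1 h2 unfolding C2_def by (simp add: algebra_simps)
  moreover have "real q > 2 * C2 / a" using qN unfolding N0_def by linarith
  then have "real q * a > 2 * C2" using a0 by (simp add: divide_less_eq)
  ultimately show False by simp
qed


lemma (in group) conj_mult:
  assumes "g \<in> carrier G" "a \<in> carrier G" "b \<in> carrier G"
  shows "g \<otimes> (a \<otimes> b) \<otimes> inv g = (g \<otimes> a \<otimes> inv g) \<otimes> (g \<otimes> b \<otimes> inv g)"
proof -
  have c: "inv g \<otimes> (g \<otimes> z) = z" if "z \<in> carrier G" for z using assms that by (simp add: m_assoc[symmetric])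
  have "(g \<otimes> a \<otimes> inv g) \<otimes> (g \<otimes> b \<otimes> inv g) = g \<otimes> (a \<otimes> (inv g \<otimes> (g \<otimes> (b \<otimes> inv g))))"
    using assms by (simp add: m_assoc)
  also have "\<dots> = g \<otimes> (a \<otimes> (b \<otimes> inv g))" using c assms by simp
  finally show ?thesis using assms by (simp add: m_assoc)
qed

lemma (in group) conj_inv:
  assumes "g \<in> carrier G" "a \<in> carrier G"
  shows "g \<otimes> inv a \<otimes> inv g = inv (g \<otimes> a \<otimes> inv g)"
  using assms by (simp add: inv_mult_group m_assoc)

lemma (in group) conj_conj:
  assumes "g \<in> carrier G" "x \<in> carrier G" "h \<in> carrier G"
  shows "g \<otimes> (x \<otimes> h \<otimes> inv x) \<otimes> inv g = (g \<otimes> x) \<otimes> h \<otimes> inv (g \<otimes> x)"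
  using assms by (simp add: inv_mult_group m_assoc)

lemma (in group) main_aux:
  fixes \<psi> :: "_ \<Rightarrow> real"
  assumes "group G"
    and "finite_generating_set G S"
    and "almost_simple G"
    and "distortion_element G S u"
    and "H \<lhd> G"
    and "\<psi> \<in> hom (G\<lparr>carrier := H\<rparr>) real_add_group"
  shows "\<forall>h\<in>H. \<psi> h = 0"
proof (rule ccontr)
  assume "\<not> (\<forall>h\<in>H. \<psi> h = 0)"
  then obtain h0 where h0: "h0 \<in> H" "\<psi> h0 \<noteq> 0" by blast
  have sg: "subgroup H G" using assms(5) normal_imp_subgroup by blast
  have hN: "\<And>x h. x \<in> carrier G \<Longrightarrow> h \<in> H \<Longrightarrow> x \<otimes> h \<otimes> inv x \<in> H"
    using assms(5) normal_inv_iff by blast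
  have add: "\<And>a b. a \<in> H \<Longrightarrow> b \<in> H \<Longrightarrow> \<psi> (a \<otimes> b) = \<psi> a + \<psi> b"
    using assms(6) unfolding hom_def real_add_group_def by simp
  have "finite H \<or> finite (rcosets H)" using assms(3,5) unfolding almost_simple_def by blast
  then show False
  proof
    assume "finite H"
    then obtain n where n: "n > 0" "h0 [^] (n::nat) = \<one>" using pow_finite_sub[OF sg _ h0(1)] by blast
    then have "real n * \<psi> h0 = 0" using psi_basic(3)[OF sg add h0(1), of n] psi_basic(1)[OF sg add] by simp
    then show False using n(1) h0(2) by simp
  next
    assume fin: "finite (rcosets H)"
    have uc: "u \<in> carrier G" using assms(4) unfolding distortion_element_def by blast
    obtain k where k: "k > 0" "u [^] (k::nat) \<in> H" using pow_finite_index[OF sg fin uc] by blast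
    define K where "K = {x\<in>H. \<forall>g\<in>carrier G. \<psi> (g \<otimes> x \<otimes> inv g) = 0}"
    have Kc: "K \<subseteq> carrier G" unfolding K_def using subgroup.mem_carrier[OF sg] by blast
    have sK: "subgroup K G"
    proof (rule subgroupI)
      show "K \<subseteq> carrier G" by (rule Kc)
      have "\<one> \<in> K" unfolding K_def using psi_basic(1)[OF sg add] subgroup.one_closed[OF sg] by simp
      then show "K \<noteq> {}" by blast
    next
      fix a assume a: "a \<in> K"
      then have aH: "a \<in> H" and ac: "a \<in> carrier G" using Kc unfolding K_def by auto
      have "\<psi> (g \<otimes> inv a \<otimes> inv g) = 0" if g: "g \<in> carrier G" for g
      proof -
        have "\<psi> (g \<otimes> inv a \<otimes> inv g) = - \<psi> (g \<otimes> a \<otimes> inv g)"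
          using conj_inv[OF g ac] psi_basic(2)[OF sg add hN[OF g aH]] by simp
        then show ?thesis using a g unfolding K_def by simp
      qed
      then show "inv a \<in> K" unfolding K_def using subgroup.m_inv_closed[OF sg aH] by blast
    next
      fix a b assume a: "a \<in> K" and b: "b \<in> K"
      then have aH: "a \<in> H" and ac: "a \<in> carrier G" and bH: "b \<in> H" and bc: "b \<in> carrier G"
        using Kc unfolding K_def by auto
      have "\<psi> (g \<otimes> (a \<otimes> b) \<otimes> inv g) = 0" if g: "g \<in> carrier G" for g
      proof -
        have "\<psi> (g \<otimes> (a \<otimes> b) \<otimes> inv g) = \<psi> (g \<otimes> a \<otimes> inv g) + \<psi> (g \<otimes> b \<otimes> inv g)"
          using conj_mult[OF g ac bc] add[OF hN[OF g aH] hN[OF g bH]] by simp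
        then show ?thesis using a b g unfolding K_def by simp
      qed
      then show "a \<otimes> b \<in> K" unfolding K_def using subgroup.m_closed[OF sg aH bH] by blast
    qed
    have KN: "K \<lhd> G" unfolding normal_inv_iff
    proof (intro conjI sK ballI)
      fix x h assume x: "x \<in> carrier G" and h: "h \<in> K"
      then have hH: "h \<in> H" and hc: "h \<in> carrier G" using Kc unfolding K_def by auto
      have "\<psi> (g \<otimes> (x \<otimes> h \<otimes> inv x) \<otimes> inv g) = 0" if g: "g \<in> carrier G" for g
        using conj_conj[OF g x hc] h g x unfolding K_def by simp
      then show "x \<otimes> h \<otimes> inv x \<in> K" unfolding K_def using hN[OF x hH] by blast
    qed
    have uK: "u [^] k \<in> K" unfolding K_def
      using k distortion_kills[OF assms(2) assms(5) fin add assms(4) k] by blast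
    have "finite K \<or> finite (rcosets K)" using assms(3) KN unfolding almost_simple_def by blast
    then show False
    proof
      assume "finite K"
      then obtain n where n: "n > 0" "(u [^] k) [^] (n::nat) = \<one>" using pow_finite_sub[OF sK _ uK] by blast
      then have "u [^] (k * n) = \<one>" using nat_pow_pow[OF uc] by simp
      moreover have "k * n > 0" using k(1) n(1) by simp
      ultimately show False using assms(4) unfolding distortion_element_def infinite_order_def by blast
    next
      assume "finite (rcosets K)"
      then obtain n where n: "n > 0" "h0 [^] (n::nat) \<in> K"
        using pow_finite_index[OF sK _ subgroup.mem_carrier[OF sg h0(1)]] by blast
      then have "\<psi> (\<one> \<otimes> h0 [^] n \<otimes> inv \<one>) = 0" unfolding K_def by blast
      moreover have "h0 [^] n \<in> carrier G" using subgroup.mem_carrier[OF sg h0(1)] by simp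
      ultimately have "\<psi> (h0 [^] n) = 0" by simp
      then have "real n * \<psi> h0 = 0" using psi_basic(3)[OF sg add h0(1), of n] by simp
      then show False using n(1) h0(2) by simp
    qed
  qed
qed


theorem lemma7p2:
  fixes G :: "('a, 'b) monoid_scheme" and H :: "'a set" and S :: "'a set"
    and u :: 'a and \<psi> :: "'a \<Rightarrow> real"
  assumes "group G"
    and "finite_generating_set G S"
    and "almost_simple G"
    and "distortion_element G S u"
    and "H \<lhd> G"
    and "\<psi> \<in> hom (G\<lparr>carrier := H\<rparr>) real_add_group"
  shows "\<forall>h\<in>H. \<psi> h = 0"
  using group.main_aux[OF assms(1) assms] .

end
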